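(* Let $W$ be a graphon satisfying the Regularity Condition. There exists $\varepsilon'>0$ such that $\det M(y)>\varepsilon'$ for all $y\in[0,1]^2$.
   Context: A graphon is a symmetric measurable $W:[0,1]^2\to[0,1]$; $D(x)=\int_0^1W(x,y)dy$. Regularity Condition: $W\in\mathcal{C}^3([0,1]^2)$, $D'>0$, $W\le1-\varepsilon_0$ and $D\ge\varepsilon_0$ for some $\varepsilon_0\in(0,1/2)$. For $y=(y_1,y_2)\in[0,1]^2$, $M(y)$ is the $2\times2$ symmetric matrix with diagonal entries $D(y_1)(1-D(y_1))$, $D(y_2)(1-D(y_2))$ and off-diagonal entries $\int_0^1W(y_1,z)W(y_2,z)dz-D(y_1)D(y_2)$. *)

theory Defs
  imports "HOL-Analysis.Analysis"
begin

text \<open>A graphon is represented by W :: real => real => real; only its values on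
the unit square matter.\<close>

definition graphon :: "(real \<Rightarrow> real \<Rightarrow> real) \<Rightarrow> bool" where
  "graphon W \<longleftrightarrow>
     (\<forall>x\<in>{0..1}. \<forall>y\<in>{0..1}. W x y = W y x) \<and>
     (\<forall>x\<in>{0..1}. \<forall>y\<in>{0..1}. 0 \<le> W x y \<and> W x y \<le> 1) \<and>
     set_borel_measurable lborel ({0..1::real} \<times> {0..1::real}) (\<lambda>(x, y). W x y)"

definition degree_fun :: "(real \<Rightarrow> real \<Rightarrow> real) \<Rightarrow> real \<Rightarrow> real" where
  "degree_fun W x = integral {0..1} (\<lambda>y. W x y)"

text \<open>C^k on a set S of the plane: all partial derivatives up to order k exist
(as derivatives within S, i.e. one-sided at the boundary) and are continuous on S.\<close>
fun Ck_on :: "nat \<Rightarrow> (real \<times> real) set \<Rightarrow> (real \<times> real \<Rightarrow> real) \<Rightarrow> bool" where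
  "Ck_on 0 S f = continuous_on S f"
| "Ck_on (Suc k) S f = (continuous_on S f \<and>
     (\<exists>f1 f2. (\<forall>p\<in>S. (f has_derivative (\<lambda>h. f1 p * fst h + f2 p * snd h)) (at p within S))
             \<and> Ck_on k S f1 \<and> Ck_on k S f2))"

definition regularity_condition :: "(real \<Rightarrow> real \<Rightarrow> real) \<Rightarrow> bool" where
  "regularity_condition W \<longleftrightarrow>
     Ck_on 3 ({0..1} \<times> {0..1}) (\<lambda>(x, y). W x y) \<and>
     (\<forall>x\<in>{0..1}. \<exists>d>0. (degree_fun W has_real_derivative d) (at x within {0..1})) \<and>
     (\<exists>\<epsilon>0::real. 0 < \<epsilon>0 \<and> \<epsilon>0 < 1/2 \<and>
        (\<forall>x\<in>{0..1}. \<forall>y\<in>{0..1}. W x y \<le> 1 - \<epsilon>0) \<and>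
        (\<forall>x\<in>{0..1}. \<epsilon>0 \<le> degree_fun W x))"

definition Mmat :: "(real \<Rightarrow> real \<Rightarrow> real) \<Rightarrow> real \<times> real \<Rightarrow> real^2^2" where
  "Mmat W y = (let D = degree_fun W; y1 = fst y; y2 = snd y;
       c = integral {0..1} (\<lambda>z. W y1 z * W y2 z) - D y1 * D y2
     in vector [vector [D y1 * (1 - D y1), c], vector [c, D y2 * (1 - D y2)]])"

end

theory Submission
  imports Defs
begin

lemma alg_id:
  fixes a b c :: real
  shows "a*(1-a)*(b*(1-b)) - (c-a*b)*(c-a*b) =
    (1-a-b+c)*(a-c)*(b-c) + c*((1-a-b+c)*(a-c) + (1-a-b+c)*(b-c) + (a-c)*(b-c))"
  by (simp add: algebra_simps)

lemma cont_slice: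
  fixes W :: "real \<Rightarrow> real \<Rightarrow> real"
  assumes "continuous_on ({0..1} \<times> {0..1}) (\<lambda>(x, y). W x y)" and "u \<in> {0..1::real}"
  shows "continuous_on {0..1} (\<lambda>z. W u z)"
proof -
  have c1: "continuous_on {0..1} (\<lambda>z::real. (u, z))"
    by (intro continuous_intros)
  have c2: "(\<lambda>z. (u, z)) ` {0..1} \<subseteq> {0..1} \<times> {0..1}" using assms(2) by auto
  have "continuous_on {0..1} ((\<lambda>(x, y). W x y) \<circ> (\<lambda>z. (u, z)))"
    by (rule continuous_on_compose[OF c1 continuous_on_subset[OF assms(1) c2]])
  then show ?thesis by (simp add: o_def)
qed
theorem lemma11p1:
  fixes W :: "real \<Rightarrow> real \<Rightarrow> real"
  assumes "graphon W" and "regularity_condition W"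
  shows "\<exists>\<epsilon>'>0. \<forall>y\<in>{0..1} \<times> {0..1}. det (Mmat W y) > \<epsilon>'"
proof -
  obtain e0 :: real where e0: "0 < e0" "e0 < 1/2"
    and Wle: "\<forall>x\<in>{0..1}. \<forall>y\<in>{0..1}. W x y \<le> 1 - e0"
    and Dge: "\<forall>x\<in>{0..1}. e0 \<le> degree_fun W x"
    using assms(2) unfolding regularity_condition_def by (elim conjE exE) (rule that; assumption)
  have cont: "continuous_on ({0..1} \<times> {0..1}) (\<lambda>(x, y). W x y)"
    using assms(2) unfolding regularity_condition_def numeral_3_eq_3 Ck_on.simps by (elim conjE)
  have W01: "\<forall>x\<in>{0..1}. \<forall>y\<in>{0..1}. 0 \<le> W x y \<and> W x y \<le> 1"
    using assms(1) unfolding graphon_def by blast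
  have main: "det (Mmat W (y1, y2)) \<ge> e0^6" if y1: "y1 \<in> {0..1}" and y2: "y2 \<in> {0..1}" for y1 y2
  proof -
    define f where "f = (\<lambda>z. W y1 z)"
    define g where "g = (\<lambda>z. W y2 z)"
    have cf: "continuous_on {0..1} f" unfolding f_def using cont_slice[OF cont y1] .
    have cg: "continuous_on {0..1} g" unfolding g_def using cont_slice[OF cont y2] .
    have If: "f integrable_on {0..1}" using cf integrable_continuous_interval by blast
    have Ig: "g integrable_on {0..1}" using cg integrable_continuous_interval by blast
    have Ifg: "(\<lambda>z. f z * g z) integrable_on {0..1}"
      using continuous_on_mult[OF cf cg] integrable_continuous_interval by blast
    define a where "a = integral {0..1} f"
    define b where "b = integral {0..1} g"
    define c where "c = integral {0..1} (\<lambda>z. f z * g z)"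
    have Da: "degree_fun W y1 = a" unfolding a_def f_def degree_fun_def by simp
    have Db: "degree_fun W y2 = b" unfolding b_def g_def degree_fun_def by simp
    have ae: "a \<ge> e0" using Dge y1 Da by auto
    have be: "b \<ge> e0" using Dge y2 Db by auto
    have c0: "c \<ge> 0" unfolding c_def
      by (rule integral_nonneg[OF Ifg]) (use W01 y1 y2 in \<open>auto simp: f_def g_def\<close>)
    have det_eq: "det (Mmat W (y1, y2)) = a*(1-a)*(b*(1-b)) - (c-a*b)*(c-a*b)"
      unfolding Mmat_def Let_def det_2 by (simp add: c_def f_def g_def Da[unfolded f_def a_def] Db[unfolded g_def b_def] a_def b_def)
    have hf: "(f has_integral a) {0..1}" using If unfolding a_def by (rule integrable_integral)
    have hg: "(g has_integral b) {0..1}" using Ig unfolding b_def by (rule integrable_integral)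
    have hfg: "((\<lambda>z. f z * g z) has_integral c) {0..1}" using Ifg unfolding c_def by (rule integrable_integral)
    have hk: "((\<lambda>z. k) has_integral k) {0..1::real}" for k :: real
      using has_integral_const_real[of k 0 1] by simp
    have pt: "f z \<ge> 0" "g z \<ge> 0" "f z \<le> 1 - e0" "g z \<le> 1 - e0" if "z \<in> {0..1}" for z
      using W01 Wle y1 y2 that by (auto simp: f_def g_def)
    have p10: "a - c \<ge> e0 * a"
    proof -
      have h1: "((\<lambda>z. e0 * f z) has_integral (e0 * a)) {0..1}" using hf by (rule has_integral_mult_right)
      have h2: "((\<lambda>z. f z - f z * g z) has_integral (a - c)) {0..1}" using hf hfg by (rule has_integral_diff)
      show ?thesis
      proof (rule has_integral_le[OF h1 h2])
        fix z :: real assume z: "z \<in> {0..1}"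
        have "f z * e0 \<le> f z * (1 - g z)" by (rule mult_left_mono) (use pt[OF z] in linarith)+
        moreover have "f z * (1 - g z) = f z - f z * g z" by (simp add: right_diff_distrib)
        ultimately show "e0 * f z \<le> f z - f z * g z" by (simp add: mult.commute)
      qed
    qed
    have p01: "b - c \<ge> e0 * b"
    proof -
      have h1: "((\<lambda>z. e0 * g z) has_integral (e0 * b)) {0..1}" using hg by (rule has_integral_mult_right)
      have h2: "((\<lambda>z. g z - f z * g z) has_integral (b - c)) {0..1}" using hg hfg by (rule has_integral_diff)
      show ?thesis
      proof (rule has_integral_le[OF h1 h2])
        fix z :: real assume z: "z \<in> {0..1}"
        have "g z * e0 \<le> g z * (1 - f z)" by (rule mult_left_mono) (use pt[OF z] in linarith)+
        moreover have "g z * (1 - f z) = g z - f z * g z" by (simp add: right_diff_distrib mult.commute)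
        ultimately show "e0 * g z \<le> g z - f z * g z" by (simp add: mult.commute)
      qed
    qed
    have p00: "1 - a - b + c \<ge> e0 * e0"
    proof -
      have h2: "((\<lambda>z. 1 - f z - g z + f z * g z) has_integral (1 - a - b + c)) {0..1}"
        by (intro has_integral_add has_integral_diff hk hf hg hfg)
      show ?thesis
      proof (rule has_integral_le[OF hk[of "e0 * e0"] h2])
        fix z :: real assume z: "z \<in> {0..1}"
        have "e0 * e0 \<le> (1 - f z) * (1 - g z)" by (rule mult_mono) (use pt[OF z] e0 in linarith)+
        moreover have "(1 - f z) * (1 - g z) = 1 - f z - g z + f z * g z" by (simp add: algebra_simps)
        ultimately show "e0 * e0 \<le> 1 - f z - g z + f z * g z" by simp
      qed
    qed
    have q1: "e0 * a \<ge> e0 * e0" using ae e0 by (intro mult_left_mono) auto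
    have q2: "e0 * b \<ge> e0 * e0" using be e0 by (intro mult_left_mono) auto
    have e2: "e0 * e0 > 0" using e0 by simp
    have nn: "1 - a - b + c \<ge> 0" "a - c \<ge> 0" "b - c \<ge> 0"
      using p00 p10 p01 q1 q2 e2 by linarith+
    have Q: "0 \<le> c*((1-a-b+c)*(a-c) + (1-a-b+c)*(b-c) + (a-c)*(b-c))"
      by (intro mult_nonneg_nonneg add_nonneg_nonneg nn c0)
    have d1: "det (Mmat W (y1, y2)) \<ge> (1-a-b+c)*(a-c)*(b-c)"
      using Q unfolding det_eq alg_id by linarith
    have m1: "(e0*e0)*(e0*e0) \<le> (1-a-b+c)*(a-c)"
      by (rule mult_mono) (use p00 p10 q1 nn e2 in auto)
    have m2: "(e0*e0)*(e0*e0)*(e0*e0) \<le> (1-a-b+c)*(a-c)*(b-c)"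
      by (rule mult_mono[OF m1]) (use p01 q2 nn e2 in auto)
    have p6: "e0^6 = (e0*e0)*(e0*e0)*(e0*e0)"
      by (simp add: eval_nat_numeral)
    show ?thesis using d1 m2 unfolding p6 by linarith
  qed
  show ?thesis
  proof (intro exI[of _ "e0^6/2"] conjI ballI)
    show "0 < e0^6/2" using e0 by simp
    fix y :: "real \<times> real" assume "y \<in> {0..1} \<times> {0..1}"
    then obtain y1 y2 where yy: "y = (y1, y2)" "y1 \<in> {0..1}" "y2 \<in> {0..1}" by auto
    have "(0::real) < e0^6" using e0 by simp
    moreover have "det (Mmat W y) \<ge> e0^6" unfolding yy(1) using main[OF yy(2,3)] .
    ultimately show "e0^6/2 < det (Mmat W y)" by linarith
  qed
qed

end
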